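(* Let $0<\alpha<1$ and let $g_\alpha$ be the generalized conical spacetime metric on $\mathbb{R}^4$ (described in the context), $S=\{0\}\times\mathbb{R}^3$, and $e$ the Euclidean metric on $\mathbb{R}^4$. Suppose the generalized curve $\gamma\in\mathcal{G}[\mathbb{R},\mathbb{R}^4]$ satisfies $e(\dot\gamma,\dot\gamma)=1$ in $\mathcal{G}(\mathbb{R})$ and $g_\alpha(\dot\gamma,\dot\gamma)$ is uniformly strictly negative, i.e., for any representatives $(\gamma_\varepsilon)_{\varepsilon\in(0,1]}$ of $\gamma$ and $(g_\alpha^\varepsilon)_{\varepsilon\in(0,1]}$ of $g_\alpha$ there exist $q\in[0,\infty)$ and $\varepsilon_0\in(0,1]$ such that $$g_\alpha^\varepsilon(\gamma_\varepsilon(s))(\dot\gamma_\varepsilon(s),\dot\gamma_\varepsilon(s))\le -\varepsilon^q\qquad(s\in\mathbb{R},\ 0<\varepsilon<\varepsilon_0).$$ Then there is a unique $\tilde s\in(\widetilde{\mathbb{R}})_c$ such that $\gamma(\tilde s)\in\widetilde S_c$.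
   Context: Generalized conical spacetime: with coordinates $(t,x,y,z)$, $g_\alpha$ is the Colombeau generalized Lorentz metric represented by $g_\alpha^\varepsilon=-dt^2+\rho^\varepsilon$, $\rho^\varepsilon = (\frac{1+\alpha^2}{2}+\frac{1-\alpha^2}{2}f_1^\varepsilon)dx^2 + (\frac{1+\alpha^2}{2}-\frac{1-\alpha^2}{2}f_1^\varepsilon)dy^2 + (1-\alpha^2)f_2^\varepsilon\,dx\,dy + dz^2$, where $f_j^\varepsilon = f_j*\psi_\varepsilon$ are mollifications of $f_1=\frac{x^2-y^2}{x^2+y^2}$, $f_2=\frac{2xy}{x^2+y^2}$ by a real-valued delta net, chosen such that there is $\beta>0$ with $\rho^\varepsilon(x,y,z)(v,v)\ge\beta(v_1^2+v_2^2)+v_3^2$ for all points, all $v\in\mathbb{R}^3$ and all $\varepsilon\in(0,1]$ (e.g. $\psi_\varepsilon(x,y)=\varepsilon^{-2}\varphi(x/\varepsilon,y/\varepsilon)$ with $\varphi\in\mathcal S(\mathbb{R}^2)$ real, $\int\varphi=1$, and either $\varphi\ge0$ or $\alpha^2>(\|\varphi\|_{L^1}-1)/(\|\varphi\|_{L^1}+1)$). Colombeau notions (special algebra): $\mathcal{G}(\mathbb{R})$ is the quotient of moderate nets of smooth functions (each derivative $O(\varepsilon^{-N})$ uniformly on compacts) by negligible nets (each derivative $O(\varepsilon^m)$ for all $m$ uniformly on compacts). $\mathcal{G}[\mathbb{R},\mathbb{R}^4]$ is the space of c-bounded generalized maps: classes of moderate nets $(\gamma_\varepsilon)$ of smooth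 maps $\mathbb{R}\to\mathbb{R}^4$ such that every compact $K\subset\mathbb{R}$ has a compact $K'\subset\mathbb{R}^4$ with $\gamma_\varepsilon(K)\subset K'$ for small $\varepsilon$, modulo negligible nets. $(\widetilde{\mathbb{R}})_c$ is the set of compactly supported generalized points: nets $(s_\varepsilon)$ of reals bounded for small $\varepsilon$, modulo $|s_\varepsilon-t_\varepsilon|=O(\varepsilon^m)$ for all $m$; $\widetilde S_c$ is defined analogously with nets of points in $S$. The generalized point value $\gamma(\tilde s)$ is the class of $(\gamma_\varepsilon(s_\varepsilon))$. *)

theory Defs
  imports "HOL-Analysis.Analysis"
begin

definition dpx :: "(real \<times> real \<Rightarrow> real) \<Rightarrow> real \<times> real \<Rightarrow> real" where
  "dpx f = (\<lambda>p. deriv (\<lambda>t. f (t, snd p)) (fst p))"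

definition dpy :: "(real \<times> real \<Rightarrow> real) \<Rightarrow> real \<times> real \<Rightarrow> real" where
  "dpy f = (\<lambda>p. deriv (\<lambda>t. f (fst p, t)) (snd p))"

text \<open>Iterated partial derivative along a word (True = d/dx, False = d/dy).\<close>
fun dpw :: "bool list \<Rightarrow> (real \<times> real \<Rightarrow> real) \<Rightarrow> real \<times> real \<Rightarrow> real" where
  "dpw [] f = f"
| "dpw (b # bs) f = (if b then dpx else dpy) (dpw bs f)"

definition schwartz :: "(real \<times> real \<Rightarrow> real) \<Rightarrow> bool" where
  "schwartz \<phi> \<longleftrightarrow>
     (\<forall>w. continuous_on UNIV (dpw w \<phi>)
        \<and> (\<forall>p. ((\<lambda>t. dpw w \<phi> (t, snd p)) has_real_derivative dpx (dpw w \<phi>) p) (at (fst p))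
             \<and> ((\<lambda>t. dpw w \<phi> (fst p, t)) has_real_derivative dpy (dpw w \<phi>) p) (at (snd p)))
        \<and> (\<forall>k::nat. bounded (range (\<lambda>p. (1 + norm p) ^ k * dpw w \<phi> p))))"

definition f1 :: "real \<times> real \<Rightarrow> real" where
  "f1 p = ((fst p)\<^sup>2 - (snd p)\<^sup>2) / ((fst p)\<^sup>2 + (snd p)\<^sup>2)"

definition f2 :: "real \<times> real \<Rightarrow> real" where
  "f2 p = (2 * fst p * snd p) / ((fst p)\<^sup>2 + (snd p)\<^sup>2)"

definition delta_net :: "(real \<times> real \<Rightarrow> real) \<Rightarrow> real \<Rightarrow> real \<times> real \<Rightarrow> real" where
  "delta_net \<phi> \<epsilon> w = \<phi> (fst w / \<epsilon>, snd w / \<epsilon>) / \<epsilon>\<^sup>2"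

definition moll :: "(real \<times> real \<Rightarrow> real) \<Rightarrow> real \<Rightarrow> (real \<times> real \<Rightarrow> real) \<Rightarrow> real \<times> real \<Rightarrow> real" where
  "moll \<phi> \<epsilon> f p = (\<integral>w. f (p - w) * delta_net \<phi> \<epsilon> w \<partial>lborel)"

definition rho :: "real \<Rightarrow> (real \<times> real \<Rightarrow> real) \<Rightarrow> real \<Rightarrow> real \<Rightarrow> real \<Rightarrow> real \<Rightarrow> real \<Rightarrow> real \<Rightarrow> real \<Rightarrow> real" where
  "rho \<alpha> \<phi> \<epsilon> x y z v1 v2 v3 =
     ((1 + \<alpha>\<^sup>2) / 2 + (1 - \<alpha>\<^sup>2) / 2 * moll \<phi> \<epsilon> f1 (x, y)) * v1\<^sup>2
   + ((1 + \<alpha>\<^sup>2) / 2 - (1 - \<alpha>\<^sup>2) / 2 * moll \<phi> \<epsilon> f1 (x, y)) * v2\<^sup>2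
   + (1 - \<alpha>\<^sup>2) * moll \<phi> \<epsilon> f2 (x, y) * v1 * v2
   + v3\<^sup>2"

text \<open>g_alpha^eps(p)(v,v) on R^4 with coordinates (t,x,y,z) = components 1,2,3,4.\<close>
definition gmet :: "real \<Rightarrow> (real \<times> real \<Rightarrow> real) \<Rightarrow> real \<Rightarrow> real^4 \<Rightarrow> real^4 \<Rightarrow> real" where
  "gmet \<alpha> \<phi> \<epsilon> p v = - (v $ 1)\<^sup>2 + rho \<alpha> \<phi> \<epsilon> (p $ 2) (p $ 3) (p $ 4) (v $ 2) (v $ 3) (v $ 4)"

definition vd :: "nat \<Rightarrow> (real \<Rightarrow> 'a::real_normed_vector) \<Rightarrow> real \<Rightarrow> 'a" where
  "vd k f = ((\<lambda>g s. vector_derivative g (at s)) ^^ k) f"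

definition smooth_curve :: "(real \<Rightarrow> 'a::real_normed_vector) \<Rightarrow> bool" where
  "smooth_curve f \<longleftrightarrow> (\<forall>k s. (vd k f has_vector_derivative vd (Suc k) f s) (at s))"

text \<open>"for small eps": for all eps in (0, eps0) for some eps0 in (0,1].\<close>
definition moderate_net :: "(real \<Rightarrow> real \<Rightarrow> 'a::real_normed_vector) \<Rightarrow> bool" where
  "moderate_net u \<longleftrightarrow> (\<forall>\<epsilon>\<in>{0<..1}. smooth_curve (u \<epsilon>)) \<and>
     (\<forall>K k. compact K \<longrightarrow> (\<exists>N::nat. \<exists>C. \<exists>\<epsilon>0\<in>{0<..1}. \<forall>\<epsilon>\<in>{0<..<\<epsilon>0}. \<forall>s\<in>K.
        norm (vd k (u \<epsilon>) s) \<le> C * (1 / \<epsilon>) ^ N))"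

definition negligible_net :: "(real \<Rightarrow> real \<Rightarrow> 'a::real_normed_vector) \<Rightarrow> bool" where
  "negligible_net u \<longleftrightarrow>
     (\<forall>K k m. compact K \<longrightarrow> (\<exists>C. \<exists>\<epsilon>0\<in>{0<..1}. \<forall>\<epsilon>\<in>{0<..<\<epsilon>0}. \<forall>s\<in>K.
        norm (vd k (u \<epsilon>) s) \<le> C * \<epsilon> ^ m))"

text \<open>Representatives of elements of G[R,R^4]: moderate, c-bounded nets.\<close>
definition c_bounded_net :: "(real \<Rightarrow> real \<Rightarrow> real^4) \<Rightarrow> bool" where
  "c_bounded_net \<gamma> \<longleftrightarrow> (\<forall>K. compact K \<longrightarrow>
     (\<exists>K'. compact K' \<and> (\<exists>\<epsilon>0\<in>{0<..1}. \<forall>\<epsilon>\<in>{0<..<\<epsilon>0}. \<gamma> \<epsilon> ` K \<subseteq> K')))"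

definition gen_curve_rep :: "(real \<Rightarrow> real \<Rightarrow> real^4) \<Rightarrow> bool" where
  "gen_curve_rep \<gamma> \<longleftrightarrow> moderate_net \<gamma> \<and> c_bounded_net \<gamma>"

definition cs_point :: "(real \<Rightarrow> 'a::real_normed_vector) \<Rightarrow> bool" where
  "cs_point s \<longleftrightarrow> (\<exists>C. \<exists>\<epsilon>0\<in>{0<..1}. \<forall>\<epsilon>\<in>{0<..<\<epsilon>0}. norm (s \<epsilon>) \<le> C)"

definition pt_equiv :: "(real \<Rightarrow> 'a::real_normed_vector) \<Rightarrow> (real \<Rightarrow> 'a) \<Rightarrow> bool" where
  "pt_equiv s t \<longleftrightarrow> (\<forall>m::nat. \<exists>C. \<exists>\<epsilon>0\<in>{0<..1}. \<forall>\<epsilon>\<in>{0<..<\<epsilon>0}.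
     norm (s \<epsilon> - t \<epsilon>) \<le> C * \<epsilon> ^ m)"

text \<open>Membership of a generalized point (given by a representative net p) in S~_c.\<close>
definition in_gen_c :: "'a::real_normed_vector set \<Rightarrow> (real \<Rightarrow> 'a) \<Rightarrow> bool" where
  "in_gen_c S p \<longleftrightarrow> (\<exists>q. (\<forall>\<epsilon>\<in>{0<..1}. q \<epsilon> \<in> S) \<and> cs_point q \<and> pt_equiv p q)"

definition Sslice :: "(real^4) set" where
  "Sslice = {p. p $ 1 = 0}"

end

theory Submission
  imports Defs
begin

lemma vd0: "vd 0 f = f" by (simp add: vd_def)
lemma vd1: "vd (Suc 0) f = (\<lambda>s. vector_derivative f (at s))" by (simp add: vd_def)

lemma comp_deriv:
  fixes g :: "real \<Rightarrow> real^4"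
  assumes "(g has_vector_derivative g') (at t)"
  shows "((\<lambda>t. g t $ i) has_real_derivative g' $ i) (at t)"
  using bounded_linear.has_vector_derivative[OF bounded_linear_vec_nth assms, of i]
  by (simp add: has_real_derivative_iff_has_vector_derivative)

lemma norm4: "(norm (v::real^4))\<^sup>2 = (v$1)\<^sup>2 + (v$2)\<^sup>2 + (v$3)\<^sup>2 + (v$4)\<^sup>2"
  unfolding norm_vec_def L2_set_def by (simp add: sum_4)

lemma mvt_lower:
  fixes f f' :: "real \<Rightarrow> real"
  assumes d: "\<And>t. (f has_real_derivative f' t) (at t)"
    and b: "\<And>t. t \<in> {-T..T} \<Longrightarrow> a \<le> \<bar>f' t\<bar>"
    and x: "x \<in> {-T..T}" and y: "y \<in> {-T..T}"
  shows "a * \<bar>x - y\<bar> \<le> \<bar>f x - f y\<bar>"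
proof -
  have *: "a * \<bar>x - y\<bar> \<le> \<bar>f x - f y\<bar>" if "x < y" "x \<in> {-T..T}" "y \<in> {-T..T}" for x y
  proof -
    obtain z where z: "x < z" "z < y" "f y - f x = (y - x) * f' z"
      using MVT2[OF \<open>x < y\<close>, of f f'] d by blast
    have "z \<in> {-T..T}" using z that by auto
    hence "a \<le> \<bar>f' z\<bar>" by (rule b)
    hence "a * \<bar>x - y\<bar> \<le> \<bar>f' z\<bar> * \<bar>y - x\<bar>" using that
      by (simp add: abs_minus_commute mult_right_mono)
    also have "\<dots> = \<bar>(y - x) * f' z\<bar>" by (simp add: abs_mult)
    also have "\<dots> = \<bar>f x - f y\<bar>" using z(3) by (simp add: abs_minus_commute)
    finally show ?thesis .
  qed
  consider "x < y" | "x = y" | "y < x" by linarith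
  thus ?thesis
  proof cases
    case 1 thus ?thesis using * x y by blast
  next
    case 2
    from b[OF x] have "0 \<le> \<bar>f' x\<bar>" by simp
    thus ?thesis using 2 by simp
  next
    case 3 thus ?thesis using *[OF 3 y x] by (simp add: abs_minus_commute)
  qed
qed

lemma zero_pos:
  fixes f f' :: "real \<Rightarrow> real"
  assumes d: "\<And>t. (f has_real_derivative f' t) (at t)"
    and b: "\<And>t. t \<in> {-T..T} \<Longrightarrow> a \<le> f' t"
    and a: "0 < a" and f0: "\<bar>f 0\<bar> < a * T"
  shows "\<exists>t\<in>{-T..T}. f t = 0"
proof -
  have T: "0 < T" using f0 a by (smt (verit) mult_nonpos_nonpos zero_less_mult_iff)
  obtain z where z: "0 < z" "z < T" "f T - f 0 = (T - 0) * f' z"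
    using MVT2[OF T, of f f'] d by blast
  have "a \<le> f' z" using z by (intro b) auto
  hence "a * T \<le> T * f' z" using T by (simp add: mult.commute)
  moreover have "f T = f 0 + T * f' z" using z by simp
  ultimately have fT: "0 \<le> f T" using f0 abs_ge_minus_self[of "f 0"] by linarith
  have T': "-T < 0" using T by simp
  obtain w where w: "-T < w" "w < 0" "f 0 - f (-T) = (0 - (-T)) * f' w"
    using MVT2[OF T', of f f'] d by blast
  have "a \<le> f' w" using w by (intro b) auto
  hence "a * T \<le> T * f' w" using T by (simp add: mult.commute)
  moreover have "f (-T) = f 0 - T * f' w" using w by simp
  ultimately have fT': "f (-T) \<le> 0" using f0 abs_ge_self[of "f 0"] by linarith
  have "continuous_on {-T..T} f"
    using d by (meson DERIV_isCont continuous_at_imp_continuous_on)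
  then obtain t where "-T \<le> t" "t \<le> T" "f t = 0"
    using IVT'[of f "-T" 0 T] fT fT' T by auto
  thus ?thesis by auto
qed

lemma zero_exists:
  fixes f f' :: "real \<Rightarrow> real"
  assumes d: "\<And>t. (f has_real_derivative f' t) (at t)"
    and c: "continuous_on UNIV f'"
    and b: "\<And>t. t \<in> {-T..T} \<Longrightarrow> a \<le> \<bar>f' t\<bar>"
    and a: "0 < a" and f0: "\<bar>f 0\<bar> < a * T"
  shows "\<exists>t\<in>{-T..T}. f t = 0"
proof -
  have T: "0 < T" using f0 a by (smt (verit) mult_nonpos_nonpos zero_less_mult_iff)
  have cT: "continuous_on {a..b} f'" for a b using c by (meson continuous_on_subset subset_UNIV)
  have nz: "f' t \<noteq> 0" if "t \<in> {-T..T}" for t using b[OF that] a by auto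
  have sgn: "(\<forall>t\<in>{-T..T}. 0 < f' t) \<or> (\<forall>t\<in>{-T..T}. f' t < 0)"
  proof (rule ccontr)
    assume "\<not> ?thesis"
    then obtain u v where u: "u \<in> {-T..T}" "f' u \<le> 0" and v: "v \<in> {-T..T}" "0 \<le> f' v"
      by (meson not_le)
    have "\<exists>t\<in>{-T..T}. f' t = 0"
    proof (cases "u \<le> v")
      case True
      then obtain t where "u \<le> t" "t \<le> v" "f' t = 0" using IVT'[of f' u 0 v] u v cT by auto
      thus ?thesis using u v by (intro bexI[of _ t]) auto
    next
      case False
      then obtain t where "v \<le> t" "t \<le> u" "f' t = 0" using IVT2'[of f' u 0 v] u v cT by auto
      thus ?thesis using u v by (intro bexI[of _ t]) auto
    qed
    thus False using nz by blast
  qed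
  thus ?thesis
  proof
    assume p: "\<forall>t\<in>{-T..T}. 0 < f' t"
    show ?thesis by (rule zero_pos[OF d _ a f0]) (use b p in force)
  next
    assume p: "\<forall>t\<in>{-T..T}. f' t < 0"
    have d': "((\<lambda>t. - f t) has_real_derivative - f' t) (at t)" for t
      using d[of t] by (intro derivative_intros)
    have b': "a \<le> - f' t" if "t \<in> {-T..T}" for t
      using b[OF that] p that by (metis abs_of_neg)
    have "\<exists>t\<in>{-T..T}. - f t = 0"
      by (rule zero_pos[of "\<lambda>t. - f t" "\<lambda>t. - f' t", OF d' b' a]) (use f0 in simp_all)
    thus ?thesis by simp
  qed
qed


lemma alg:
  fixes \<beta> v x y z :: real
  assumes b: "0 < \<beta>" and h: "\<beta> * (x\<^sup>2 + y\<^sup>2) + z\<^sup>2 \<le> v\<^sup>2"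
    and N: "1/2 \<le> v\<^sup>2 + x\<^sup>2 + y\<^sup>2 + z\<^sup>2"
  shows "sqrt (min \<beta> 1 / (2 * (1 + min \<beta> 1))) \<le> \<bar>v\<bar>"
proof -
  define c where "c = min \<beta> 1"
  have c: "0 < c" "c \<le> \<beta>" "c \<le> 1" using b by (auto simp: c_def)
  have "c * (x\<^sup>2 + y\<^sup>2) \<le> \<beta> * (x\<^sup>2 + y\<^sup>2)" using c by (intro mult_right_mono) auto
  moreover have "c * z\<^sup>2 \<le> z\<^sup>2" using c mult_right_mono[of c 1 "z\<^sup>2"] by simp
  ultimately have "c * (x\<^sup>2 + y\<^sup>2 + z\<^sup>2) \<le> v\<^sup>2" using h by (simp add: algebra_simps)
  hence "c * (v\<^sup>2 + x\<^sup>2 + y\<^sup>2 + z\<^sup>2) \<le> (1 + c) * v\<^sup>2" by (simp add: algebra_simps)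
  moreover have "c * (1/2) \<le> c * (v\<^sup>2 + x\<^sup>2 + y\<^sup>2 + z\<^sup>2)" using c N by (intro mult_left_mono) auto
  ultimately have "c / 2 \<le> (1 + c) * v\<^sup>2" by simp
  hence "c / (2 * (1 + c)) \<le> v\<^sup>2" using c by (simp add: field_simps)
  hence "sqrt (c / (2 * (1 + c))) \<le> sqrt (v\<^sup>2)" by (rule real_sqrt_le_mono)
  thus ?thesis by (simp add: c_def)
qed


theorem mainTheorem4:
  fixes \<alpha> :: real
    and \<phi> :: "real \<times> real \<Rightarrow> real"
    and \<gamma> :: "real \<Rightarrow> real \<Rightarrow> real^4"
  assumes alpha: "0 < \<alpha>" "\<alpha> < 1"
    and phi_schwartz: "schwartz \<phi>"
    and phi_int: "(\<integral>w. \<phi> w \<partial>lborel) = 1"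
    and beta: "\<exists>\<beta>>0. \<forall>\<epsilon>\<in>{0<..1}. \<forall>x y z v1 v2 v3.
                 rho \<alpha> \<phi> \<epsilon> x y z v1 v2 v3 \<ge> \<beta> * (v1\<^sup>2 + v2\<^sup>2) + v3\<^sup>2"
    and gamma: "gen_curve_rep \<gamma>"
    and unit: "negligible_net (\<lambda>\<epsilon> s. (norm (vector_derivative (\<gamma> \<epsilon>) (at s)))\<^sup>2 - 1)"
    and timelike: "\<exists>q\<ge>0. \<exists>\<epsilon>0\<in>{0<..1}. \<forall>s. \<forall>\<epsilon>\<in>{0<..<\<epsilon>0}.
        gmet \<alpha> \<phi> \<epsilon> (\<gamma> \<epsilon> s) (vector_derivative (\<gamma> \<epsilon>) (at s)) \<le> - (\<epsilon> powr q)"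
  shows "\<exists>s::real \<Rightarrow> real. cs_point s \<and> in_gen_c Sslice (\<lambda>\<epsilon>. \<gamma> \<epsilon> (s \<epsilon>))
           \<and> (\<forall>s'::real \<Rightarrow> real. cs_point s' \<and> in_gen_c Sslice (\<lambda>\<epsilon>. \<gamma> \<epsilon> (s' \<epsilon>))
                \<longrightarrow> pt_equiv s s')"
proof -
  obtain \<beta> where b: "\<beta> > 0" and bb: "\<And>\<epsilon> x y z v1 v2 v3. \<epsilon>\<in>{0<..1} \<Longrightarrow>
                 rho \<alpha> \<phi> \<epsilon> x y z v1 v2 v3 \<ge> \<beta> * (v1\<^sup>2 + v2\<^sup>2) + v3\<^sup>2"
    using beta by blast
  obtain q et where q: "q \<ge> 0" and et: "et \<in> {0<..1}" and tl: "\<And>s \<epsilon>. \<epsilon>\<in>{0<..<et} \<Longrightarrow>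
        gmet \<alpha> \<phi> \<epsilon> (\<gamma> \<epsilon> s) (vector_derivative (\<gamma> \<epsilon>) (at s)) \<le> - (\<epsilon> powr q)"
    using timelike by blast
  define a where "a = sqrt (min \<beta> 1 / (2 * (1 + min \<beta> 1)))"
  have a: "0 < a" using b by (simp add: a_def)
  define g' where "g' \<epsilon> s = vector_derivative (\<gamma> \<epsilon>) (at s)" for \<epsilon> s
  have sm: "smooth_curve (\<gamma> \<epsilon>)" if "\<epsilon> \<in> {0<..1}" for \<epsilon>
    using gamma that unfolding gen_curve_rep_def moderate_net_def by blast
  have cb: "c_bounded_net \<gamma>" using gamma unfolding gen_curve_rep_def by blast
  have D: "((\<lambda>t. \<gamma> \<epsilon> t $ 1) has_real_derivative g' \<epsilon> s $ 1) (at s)" if "\<epsilon> \<in> {0<..1}" for \<epsilon> s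
  proof -
    have "(vd 0 (\<gamma> \<epsilon>) has_vector_derivative vd (Suc 0) (\<gamma> \<epsilon>) s) (at s)"
      using sm[OF that] unfolding smooth_curve_def by blast
    thus ?thesis unfolding vd0 vd1 g'_def by (rule comp_deriv)
  qed
  have Cn: "continuous_on UNIV (\<lambda>s. g' \<epsilon> s $ 1)" if "\<epsilon> \<in> {0<..1}" for \<epsilon>
  proof -
    have "(vd (Suc 0) (\<gamma> \<epsilon>) has_vector_derivative vd (Suc (Suc 0)) (\<gamma> \<epsilon>) s) (at s)" for s
      using sm[OF that] unfolding smooth_curve_def by blast
    hence "((\<lambda>s. g' \<epsilon> s $ 1) has_real_derivative vd (Suc (Suc 0)) (\<gamma> \<epsilon>) s $ 1) (at s)" for s
      unfolding vd1 g'_def by (rule comp_deriv)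
    thus ?thesis by (meson DERIV_isCont continuous_at_imp_continuous_on)
  qed
  have LB: "\<exists>\<epsilon>1\<in>{0<..1}. \<forall>\<epsilon>\<in>{0<..<\<epsilon>1}. \<forall>t\<in>{-T..T}. a \<le> \<bar>g' \<epsilon> t $ 1\<bar>" for T
  proof -
    have "compact {-T..T}" by simp
    from unit[unfolded negligible_net_def, rule_format, OF this, of 0 1]
    obtain C e0 where e0: "e0 \<in> {0<..1}" and Ce: "\<And>\<epsilon> s. \<epsilon>\<in>{0<..<e0} \<Longrightarrow> s\<in>{-T..T} \<Longrightarrow>
        norm (vd 0 (\<lambda>s. (norm (vector_derivative (\<gamma> \<epsilon>) (at s)))\<^sup>2 - 1) s) \<le> C * \<epsilon> ^ 1"
      by blast
    define e1 where "e1 = min e0 (min et (1 / (2 * (\<bar>C\<bar> + 1))))"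
    have e1: "e1 \<in> {0<..1}" using e0 et by (auto simp: e1_def)
    show ?thesis
    proof (intro bexI[OF _ e1] ballI)
      fix \<epsilon> t assume \<epsilon>: "\<epsilon> \<in> {0<..<e1}" and t: "t \<in> {-T..T}"
      have \<epsilon>1: "\<epsilon> \<in> {0<..1}" using \<epsilon> e1 by auto
      have "\<bar>(norm (g' \<epsilon> t))\<^sup>2 - 1\<bar> \<le> C * \<epsilon>"
        using Ce[of \<epsilon> t] \<epsilon> t by (auto simp: vd0 g'_def e1_def)
      moreover have "C * \<epsilon> \<le> \<bar>C\<bar> * \<epsilon>" using \<epsilon> by (intro mult_right_mono) auto
      moreover have "\<bar>C\<bar> * \<epsilon> \<le> 1/2"
      proof -
        have "\<epsilon> \<le> 1 / (2 * (\<bar>C\<bar> + 1))" using \<epsilon> by (auto simp: e1_def)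
        hence "\<epsilon> * (2 * (\<bar>C\<bar> + 1)) \<le> 1" by (simp add: field_simps)
        moreover have "\<bar>C\<bar> * \<epsilon> \<le> (\<bar>C\<bar> + 1) * \<epsilon>" using \<epsilon> by (intro mult_right_mono) auto
        ultimately show ?thesis by (simp add: algebra_simps)
      qed
      ultimately have N: "1/2 \<le> (norm (g' \<epsilon> t))\<^sup>2" by linarith
      have "gmet \<alpha> \<phi> \<epsilon> (\<gamma> \<epsilon> t) (g' \<epsilon> t) \<le> - (\<epsilon> powr q)"
        using tl[of \<epsilon> t] \<epsilon> by (auto simp: g'_def e1_def)
      moreover have "0 \<le> \<epsilon> powr q" by simp
      moreover note bb[OF \<epsilon>1, of "g' \<epsilon> t $ 2" "g' \<epsilon> t $ 3" "g' \<epsilon> t $ 4" "\<gamma> \<epsilon> t $ 2" "\<gamma> \<epsilon> t $ 3" "\<gamma> \<epsilon> t $ 4"]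
      ultimately have h: "\<beta> * ((g' \<epsilon> t $ 2)\<^sup>2 + (g' \<epsilon> t $ 3)\<^sup>2) + (g' \<epsilon> t $ 4)\<^sup>2 \<le> (g' \<epsilon> t $ 1)\<^sup>2"
        unfolding gmet_def by linarith
      show "a \<le> \<bar>g' \<epsilon> t $ 1\<bar>" unfolding a_def
        by (rule alg[OF b h]) (use N in \<open>simp add: norm4 add.assoc\<close>)
    qed
  qed
  obtain K0 e0 where K0: "compact K0" and e0: "e0 \<in> {0<..1}" and K0e: "\<And>\<epsilon>. \<epsilon>\<in>{0<..<e0} \<Longrightarrow> \<gamma> \<epsilon> ` {0} \<subseteq> K0"
    using cb[unfolded c_bounded_net_def, rule_format, OF compact_sing[of "0::real"]] by blast
  obtain R where R: "\<And>x. x \<in> K0 \<Longrightarrow> norm x \<le> R"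
    using compact_imp_bounded[OF K0] unfolding bounded_iff by blast
  define T where "T = R / a + 1"
  have aT: "a * T = R + a" using a by (simp add: T_def field_simps)
  obtain e1 where e1: "e1 \<in> {0<..1}" and LB1: "\<And>\<epsilon> t. \<epsilon>\<in>{0<..<e1} \<Longrightarrow> t\<in>{-T..T} \<Longrightarrow> a \<le> \<bar>g' \<epsilon> t $ 1\<bar>"
    using LB[of T] by blast
  define e2 where "e2 = min e0 e1"
  have e2: "e2 \<in> {0<..1}" using e0 e1 by (auto simp: e2_def)
  define s where "s \<epsilon> = (SOME t. t \<in> {-T..T} \<and> \<gamma> \<epsilon> t $ 1 = 0)" for \<epsilon>
  have sp: "s \<epsilon> \<in> {-T..T} \<and> \<gamma> \<epsilon> (s \<epsilon>) $ 1 = 0" if \<epsilon>: "\<epsilon> \<in> {0<..<e2}" for \<epsilon>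
  proof -
    have \<epsilon>1: "\<epsilon> \<in> {0<..1}" using \<epsilon> e2 by auto
    have "\<gamma> \<epsilon> 0 \<in> K0" using K0e[of \<epsilon>] \<epsilon> by (auto simp: e2_def)
    hence "\<bar>\<gamma> \<epsilon> 0 $ 1\<bar> \<le> R" using R component_le_norm_cart[of "\<gamma> \<epsilon> 0" 1] by force
    hence f0: "\<bar>\<gamma> \<epsilon> 0 $ 1\<bar> < a * T" using aT a by linarith
    have "\<exists>t\<in>{-T..T}. \<gamma> \<epsilon> t $ 1 = 0"
      by (rule zero_exists[OF D[OF \<epsilon>1] Cn[OF \<epsilon>1] _ a f0]) (use LB1 \<epsilon> in \<open>auto simp: e2_def\<close>)
    hence "\<exists>t. t \<in> {-T..T} \<and> \<gamma> \<epsilon> t $ 1 = 0" by blast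
    thus ?thesis unfolding s_def by (rule someI_ex)
  qed
  have cs: "cs_point s" unfolding cs_point_def
  proof (intro exI[of _ T] bexI[OF _ e2] ballI)
    fix \<epsilon> assume "\<epsilon> \<in> {0<..<e2}"
    hence "s \<epsilon> \<in> {-T..T}" using sp by blast
    thus "norm (s \<epsilon>) \<le> T" by auto
  qed
  obtain K2 e3 where K2: "compact K2" and e3: "e3 \<in> {0<..1}" and K2e: "\<And>\<epsilon>. \<epsilon>\<in>{0<..<e3} \<Longrightarrow> \<gamma> \<epsilon> ` {-T..T} \<subseteq> K2"
    using cb[unfolded c_bounded_net_def, rule_format, OF compact_Icc[of "-T" T]] by blast
  obtain R2 where R2: "\<And>x. x \<in> K2 \<Longrightarrow> norm x \<le> R2"
    using compact_imp_bounded[OF K2] unfolding bounded_iff by blast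
  define qq where "qq \<epsilon> = (\<chi> i. if i = 1 then 0 else \<gamma> \<epsilon> (s \<epsilon>) $ i)" for \<epsilon>
  have ing: "in_gen_c Sslice (\<lambda>\<epsilon>. \<gamma> \<epsilon> (s \<epsilon>))" unfolding in_gen_c_def
  proof (intro exI[of _ qq] conjI)
    show "\<forall>\<epsilon>\<in>{0<..1}. qq \<epsilon> \<in> Sslice" by (simp add: Sslice_def qq_def)
    show "cs_point qq" unfolding cs_point_def
    proof (intro exI[of _ R2] bexI[of _ "min e2 e3"] ballI)
      show "min e2 e3 \<in> {0<..1}" using e2 e3 by auto
      fix \<epsilon> assume \<epsilon>: "\<epsilon> \<in> {0<..<min e2 e3}"
      have "\<gamma> \<epsilon> (s \<epsilon>) \<in> K2" using K2e[of \<epsilon>] sp[of \<epsilon>] \<epsilon> by auto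
      hence "norm (\<gamma> \<epsilon> (s \<epsilon>)) \<le> R2" by (rule R2)
      moreover have "norm (qq \<epsilon>) \<le> norm (\<gamma> \<epsilon> (s \<epsilon>))"
        by (rule norm_le_componentwise_cart) (simp add: qq_def)
      ultimately show "norm (qq \<epsilon>) \<le> R2" by linarith
    qed
    show "pt_equiv (\<lambda>\<epsilon>. \<gamma> \<epsilon> (s \<epsilon>)) qq" unfolding pt_equiv_def
    proof (intro allI exI[of _ 0] bexI[OF _ e2] ballI)
      fix m :: nat and \<epsilon> assume \<epsilon>: "\<epsilon> \<in> {0<..<e2}"
      have "\<gamma> \<epsilon> (s \<epsilon>) = qq \<epsilon>" using sp[OF \<epsilon>] by (simp add: qq_def vec_eq_iff)
      thus "norm (\<gamma> \<epsilon> (s \<epsilon>) - qq \<epsilon>) \<le> 0 * \<epsilon> ^ m" by simp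
    qed
  qed
  have un: "pt_equiv s s'" if s': "cs_point s'" "in_gen_c Sslice (\<lambda>\<epsilon>. \<gamma> \<epsilon> (s' \<epsilon>))" for s'
    unfolding pt_equiv_def
  proof
    fix m :: nat
    obtain C' e' where e': "e' \<in> {0<..1}" and C': "\<And>\<epsilon>. \<epsilon>\<in>{0<..<e'} \<Longrightarrow> norm (s' \<epsilon>) \<le> C'"
      using s'(1) unfolding cs_point_def by blast
    obtain q' where q'S: "\<forall>\<epsilon>\<in>{0<..1}. q' \<epsilon> \<in> Sslice" and q'e: "pt_equiv (\<lambda>\<epsilon>. \<gamma> \<epsilon> (s' \<epsilon>)) q'"
      using s'(2) unfolding in_gen_c_def by blast
    obtain Cm em where em: "em \<in> {0<..1}" and Cm: "\<And>\<epsilon>. \<epsilon>\<in>{0<..<em} \<Longrightarrow>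
        norm (\<gamma> \<epsilon> (s' \<epsilon>) - q' \<epsilon>) \<le> Cm * \<epsilon> ^ m"
      using q'e unfolding pt_equiv_def by blast
    define T' where "T' = max T C'"
    obtain e4 where e4: "e4 \<in> {0<..1}" and LB4: "\<And>\<epsilon> t. \<epsilon>\<in>{0<..<e4} \<Longrightarrow> t\<in>{-T'..T'} \<Longrightarrow> a \<le> \<bar>g' \<epsilon> t $ 1\<bar>"
      using LB[of T'] by blast
    define e5 where "e5 = min (min e2 e') (min em e4)"
    have e5: "e5 \<in> {0<..1}" using e2 e' em e4 by (auto simp: e5_def)
    show "\<exists>C. \<exists>\<epsilon>0\<in>{0<..1}. \<forall>\<epsilon>\<in>{0<..<\<epsilon>0}. norm (s \<epsilon> - s' \<epsilon>) \<le> C * \<epsilon> ^ m"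
    proof (intro exI[of _ "Cm / a"] bexI[OF _ e5] ballI)
      fix \<epsilon> assume \<epsilon>: "\<epsilon> \<in> {0<..<e5}"
      have \<epsilon>1: "\<epsilon> \<in> {0<..1}" using \<epsilon> e5 by auto
      have sx: "s \<epsilon> \<in> {-T'..T'}" "\<gamma> \<epsilon> (s \<epsilon>) $ 1 = 0" using sp[of \<epsilon>] \<epsilon> by (auto simp: e5_def T'_def)
      have "norm (s' \<epsilon>) \<le> C'" using C'[of \<epsilon>] \<epsilon> by (auto simp: e5_def)
      hence sy: "s' \<epsilon> \<in> {-T'..T'}" by (auto simp: T'_def)
      have "q' \<epsilon> $ 1 = 0" using q'S \<epsilon>1 by (auto simp: Sslice_def)
      hence "\<bar>\<gamma> \<epsilon> (s' \<epsilon>) $ 1\<bar> \<le> norm (\<gamma> \<epsilon> (s' \<epsilon>) - q' \<epsilon>)"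
        using component_le_norm_cart[of "\<gamma> \<epsilon> (s' \<epsilon>) - q' \<epsilon>" 1] by simp
      also have "\<dots> \<le> Cm * \<epsilon> ^ m" using Cm[of \<epsilon>] \<epsilon> by (auto simp: e5_def)
      finally have fy: "\<bar>\<gamma> \<epsilon> (s' \<epsilon>) $ 1\<bar> \<le> Cm * \<epsilon> ^ m" .
      have "a * \<bar>s \<epsilon> - s' \<epsilon>\<bar> \<le> \<bar>\<gamma> \<epsilon> (s \<epsilon>) $ 1 - \<gamma> \<epsilon> (s' \<epsilon>) $ 1\<bar>"
        by (rule mvt_lower[OF D[OF \<epsilon>1] _ sx(1) sy]) (use LB4 \<epsilon> in \<open>auto simp: e5_def\<close>)
      also have "\<dots> \<le> Cm * \<epsilon> ^ m" using fy sx(2) by simp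
      finally have "a * \<bar>s \<epsilon> - s' \<epsilon>\<bar> \<le> Cm * \<epsilon> ^ m" .
      thus "norm (s \<epsilon> - s' \<epsilon>) \<le> Cm / a * \<epsilon> ^ m" using a by (simp add: field_simps)
    qed
  qed
  show ?thesis using cs ing un by blast
qed

end
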